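(* Let $R$ be a local ring and $s\in R$ a central element. Then $A\in M_2(R;s)$ is strongly clean if and only if one of the following holds: (1) $A\in U\big(M_2(R;s)\big)$; (2) $I_2-A\in U\big(M_2(R;s)\big)$; (3) $A$ is strongly $J$-clean in $M_2(R;s)$.
   Context: All rings are associative with identity. A ring $R$ is local if $R/J(R)$ is a division ring, where $J(R)$ is the Jacobson radical; $U(T)$ is the group of units of a ring $T$. For a ring $R$ and a central element $s\in R$, $M_2(R;s)$ denotes the ring whose elements are the $2\times 2$ arrays $\left[\begin{smallmatrix} a&b\\ c&d\end{smallmatrix}\right]$ with $a,b,c,d\in R$, with componentwise addition and multiplication $\left[\begin{smallmatrix} a&b\\ c&d\end{smallmatrix}\right]\left[\begin{smallmatrix} a'&b'\\ c'&d'\end{smallmatrix}\right]=\left[\begin{smallmatrix} aa'+s^2bc'&ab'+bd'\\ ca'+dc'&s^2cb'+dd'\end{smallmatrix}\right]$, with identity $I_2$. An element $a$ of a ring $T$ is strongly clean if there is an idempotent $e\in T$ with $ae=ea$ and $a-e\in U(T)$; it is strongly $J$-clean if there is an idempotent $e\in T$ with $ae=ea$ and $a-e\in J(T)$. *)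

theory Defs
  imports "HOL-Algebra.Algebra"
begin

definition left_ideal :: "('a, 'b) ring_scheme \<Rightarrow> 'a set \<Rightarrow> bool" where
  "left_ideal R I \<longleftrightarrow> additive_subgroup I R \<and>
     (\<forall>a \<in> carrier R. \<forall>x \<in> I. a \<otimes>\<^bsub>R\<^esub> x \<in> I)"

definition maximal_left_ideal :: "('a, 'b) ring_scheme \<Rightarrow> 'a set \<Rightarrow> bool" where
  "maximal_left_ideal R I \<longleftrightarrow> left_ideal R I \<and> I \<noteq> carrier R \<and>
     (\<forall>K. left_ideal R K \<and> I \<subseteq> K \<and> K \<noteq> carrier R \<longrightarrow> K = I)"

definition jacobson :: "('a, 'b) ring_scheme \<Rightarrow> 'a set" where
  "jacobson R = {x \<in> carrier R. \<forall>I. maximal_left_ideal R I \<longrightarrow> x \<in> I}"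

definition division_ring_rec :: "('a, 'b) ring_scheme \<Rightarrow> bool" where
  "division_ring_rec D \<longleftrightarrow> ring D \<and> \<one>\<^bsub>D\<^esub> \<noteq> \<zero>\<^bsub>D\<^esub> \<and>
     (\<forall>x \<in> carrier D - {\<zero>\<^bsub>D\<^esub>}. x \<in> Units D)"

definition local_ring :: "('a, 'b) ring_scheme \<Rightarrow> bool" where
  "local_ring R \<longleftrightarrow> division_ring_rec (R Quot jacobson R)"

definition central :: "('a, 'b) ring_scheme \<Rightarrow> 'a \<Rightarrow> bool" where
  "central R s \<longleftrightarrow> s \<in> carrier R \<and> (\<forall>x \<in> carrier R. s \<otimes>\<^bsub>R\<^esub> x = x \<otimes>\<^bsub>R\<^esub> s)"

text \<open>The generalized matrix ring M_2(R;s); a matrix [a b; c d] is the tuple (a,b,c,d).\<close>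
fun M2s_mult :: "('a, 'b) ring_scheme \<Rightarrow> 'a \<Rightarrow> 'a \<times> 'a \<times> 'a \<times> 'a \<Rightarrow> 'a \<times> 'a \<times> 'a \<times> 'a \<Rightarrow> 'a \<times> 'a \<times> 'a \<times> 'a" where
  "M2s_mult R s (a, b, c, d) (a', b', c', d') =
        (a \<otimes>\<^bsub>R\<^esub> a' \<oplus>\<^bsub>R\<^esub> (s [^]\<^bsub>R\<^esub> (2::nat)) \<otimes>\<^bsub>R\<^esub> b \<otimes>\<^bsub>R\<^esub> c',
         a \<otimes>\<^bsub>R\<^esub> b' \<oplus>\<^bsub>R\<^esub> b \<otimes>\<^bsub>R\<^esub> d',
         c \<otimes>\<^bsub>R\<^esub> a' \<oplus>\<^bsub>R\<^esub> d \<otimes>\<^bsub>R\<^esub> c',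
         (s [^]\<^bsub>R\<^esub> (2::nat)) \<otimes>\<^bsub>R\<^esub> c \<otimes>\<^bsub>R\<^esub> b' \<oplus>\<^bsub>R\<^esub> d \<otimes>\<^bsub>R\<^esub> d')"

fun M2s_add :: "('a, 'b) ring_scheme \<Rightarrow> 'a \<times> 'a \<times> 'a \<times> 'a \<Rightarrow> 'a \<times> 'a \<times> 'a \<times> 'a \<Rightarrow> 'a \<times> 'a \<times> 'a \<times> 'a" where
  "M2s_add R (a, b, c, d) (a', b', c', d') =
        (a \<oplus>\<^bsub>R\<^esub> a', b \<oplus>\<^bsub>R\<^esub> b', c \<oplus>\<^bsub>R\<^esub> c', d \<oplus>\<^bsub>R\<^esub> d')"

definition M2s :: "('a, 'b) ring_scheme \<Rightarrow> 'a \<Rightarrow> ('a \<times> 'a \<times> 'a \<times> 'a) ring" where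
  "M2s R s = \<lparr>partial_object.carrier = carrier R \<times> carrier R \<times> carrier R \<times> carrier R,
     monoid.mult = M2s_mult R s,
     monoid.one = (\<one>\<^bsub>R\<^esub>, \<zero>\<^bsub>R\<^esub>, \<zero>\<^bsub>R\<^esub>, \<one>\<^bsub>R\<^esub>),
     ring.zero = (\<zero>\<^bsub>R\<^esub>, \<zero>\<^bsub>R\<^esub>, \<zero>\<^bsub>R\<^esub>, \<zero>\<^bsub>R\<^esub>),
     ring.add = M2s_add R\<rparr>"

definition strongly_clean :: "('a, 'b) ring_scheme \<Rightarrow> 'a \<Rightarrow> bool" where
  "strongly_clean T a \<longleftrightarrow> (\<exists>e \<in> carrier T. e \<otimes>\<^bsub>T\<^esub> e = e \<and>
      a \<otimes>\<^bsub>T\<^esub> e = e \<otimes>\<^bsub>T\<^esub> a \<and> a \<ominus>\<^bsub>T\<^esub> e \<in> Units T)"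

definition strongly_J_clean :: "('a, 'b) ring_scheme \<Rightarrow> 'a \<Rightarrow> bool" where
  "strongly_J_clean T a \<longleftrightarrow> (\<exists>e \<in> carrier T. e \<otimes>\<^bsub>T\<^esub> e = e \<and>
      a \<otimes>\<^bsub>T\<^esub> e = e \<otimes>\<^bsub>T\<^esub> a \<and> a \<ominus>\<^bsub>T\<^esub> e \<in> jacobson T)"

end

theory Submission
  imports Defs
begin

context ring begin

lemma addsubI:
  assumes "H \<subseteq> carrier R" "\<zero> \<in> H" "\<And>x y. x \<in> H \<Longrightarrow> y \<in> H \<Longrightarrow> x \<oplus> y \<in> H"
    "\<And>x. x \<in> H \<Longrightarrow> \<ominus> x \<in> H"
  shows "additive_subgroup H R"
  apply (rule additive_subgroupI, rule add.subgroupI)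
     apply (simp add: assms(1))
    apply (use assms(2) in blast)
   apply (simp add: a_inv_def[symmetric] assms(4))
  apply (simp add: assms(3))
  done

lemma jac_sub: "jacobson R \<subseteq> carrier R" by (auto simp: jacobson_def)

lemma jac_props:
  shows "additive_subgroup (jacobson R) R"
    and "\<And>a x. a \<in> carrier R \<Longrightarrow> x \<in> jacobson R \<Longrightarrow> a \<otimes> x \<in> jacobson R"
proof -
  show "additive_subgroup (jacobson R) R"
    apply (rule addsubI)
    by (auto simp: jacobson_def maximal_left_ideal_def left_ideal_def
        additive_subgroup.a_closed additive_subgroup.a_inv_closed additive_subgroup.zero_closed)
  show "\<And>a x. a \<in> carrier R \<Longrightarrow> x \<in> jacobson R \<Longrightarrow> a \<otimes> x \<in> jacobson R"
    by (auto simp: jacobson_def maximal_left_ideal_def left_ideal_def)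
qed

lemma left_ideal_carr: "left_ideal R I \<Longrightarrow> I \<subseteq> carrier R"
  by (auto simp: left_ideal_def additive_subgroup.a_Hcarr)

lemma left_ideal_one: "left_ideal R I \<Longrightarrow> \<one> \<in> I \<Longrightarrow> I = carrier R"
  using left_ideal_carr[of I] by (auto simp: left_ideal_def) (metis r_one one_closed)

lemma exists_max:
  assumes L: "left_ideal R L" and n: "\<one> \<notin> L"
  shows "\<exists>M. maximal_left_ideal R M \<and> L \<subseteq> M"
proof -
  let ?S = "{K. left_ideal R K \<and> L \<subseteq> K \<and> \<one> \<notin> K}"
  have "\<forall>CC\<in>chains ?S. \<exists>UU\<in>?S. \<forall>XX\<in>CC. XX \<subseteq> UU"
  proof
    fix C assume C: "C \<in> chains ?S"
    show "\<exists>UU\<in>?S. \<forall>XX\<in>C. XX \<subseteq> UU"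
    proof (cases "C = {}")
      case True then show ?thesis using L n by auto
    next
      case False
      have CS: "C \<subseteq> ?S" and ch: "\<And>p q. p \<in> C \<Longrightarrow> q \<in> C \<Longrightarrow> p \<subseteq> q \<or> q \<subseteq> p"
        using C by (auto simp: chains_def chain_subset_def)
      have li: "left_ideal R (\<Union>C)"
        unfolding left_ideal_def
      proof
        show "additive_subgroup (\<Union>C) R"
        proof (rule addsubI)
          show "\<Union>C \<subseteq> carrier R" using CS left_ideal_carr by blast
          obtain P1 where "P1 \<in> C" using False by blast
          then show "\<zero> \<in> \<Union>C" using CS
            by (auto simp: left_ideal_def intro: additive_subgroup.zero_closed)
          fix x y assume "x \<in> \<Union>C" "y \<in> \<Union>C"
          then obtain P1 Q1 where XY: "P1 \<in> C" "Q1 \<in> C" "x \<in> P1" "y \<in> Q1" by blast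
          show "x \<oplus> y \<in> \<Union>C"
          proof (cases "P1 \<subseteq> Q1")
            case True
            then show ?thesis using XY CS
              by (auto simp: left_ideal_def intro!: additive_subgroup.a_closed)
          next
            case False
            then have "Q1 \<subseteq> P1" using ch XY by blast
            then show ?thesis using XY CS
              by (auto simp: left_ideal_def intro!: additive_subgroup.a_closed)
          qed
        next
          fix x assume "x \<in> \<Union>C"
          then show "\<ominus> x \<in> \<Union>C" using CS
            by (auto simp: left_ideal_def intro!: additive_subgroup.a_inv_closed)
        qed
        show "\<forall>a\<in>carrier R. \<forall>x\<in>\<Union>C. a \<otimes> x \<in> \<Union>C"
        proof (intro ballI)
          fix a x assume a: "a \<in> carrier R" and "x \<in> \<Union>C"
          then obtain K where K: "K \<in> C" "x \<in> K" by blast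
          then have "left_ideal R K" using CS by blast
          then have "a \<otimes> x \<in> K" using a K by (auto simp: left_ideal_def)
          then show "a \<otimes> x \<in> \<Union>C" using K by blast
        qed
      qed
      moreover have "L \<subseteq> \<Union>C" using False CS by blast
      moreover have "\<one> \<notin> \<Union>C" using CS by blast
      ultimately show ?thesis by blast
    qed
  qed
  then obtain M where M: "M \<in> ?S" and mx: "\<forall>Z1\<in>?S. M \<subseteq> Z1 \<longrightarrow> Z1 = M"
    by (rule Zorn_Lemma2[THEN bexE]) blast
  have "maximal_left_ideal R M"
    unfolding maximal_left_ideal_def
  proof (intro conjI allI impI)
    show "left_ideal R M" using M by blast
    show "M \<noteq> carrier R" using M by auto
    fix K assume K: "left_ideal R K \<and> M \<subseteq> K \<and> K \<noteq> carrier R"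
    then have "\<one> \<notin> K" using left_ideal_one by blast
    then show "K = M" using mx K M by blast
  qed
  then show ?thesis using M by blast
qed

lemma jac_one_plus_left:
  assumes x: "x \<in> jacobson R"
  shows "\<exists>v\<in>carrier R. v \<otimes> (\<one> \<oplus> x) = \<one>"
proof (rule ccontr)
  assume nv: "\<not> ?thesis"
  have xc: "x \<in> carrier R" using x jac_sub by blast
  have ox: "\<one> \<oplus> x \<in> carrier R" using xc by simp
  let ?L = "{y \<otimes> (\<one> \<oplus> x) | y. y \<in> carrier R}"
  have "left_ideal R ?L"
    unfolding left_ideal_def
  proof
    show "additive_subgroup ?L R"
    proof (rule addsubI)
      show "?L \<subseteq> carrier R"
      proof
        fix a assume "a \<in> ?L"
        then obtain y where "a = y \<otimes> (\<one> \<oplus> x)" "y \<in> carrier R" by blast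
        then show "a \<in> carrier R" using ox by simp
      qed
      have "\<zero> = \<zero> \<otimes> (\<one> \<oplus> x)" using ox by simp
      then show "\<zero> \<in> ?L" using zero_closed by blast
      fix a b assume "a \<in> ?L" "b \<in> ?L"
      then obtain y z where yz: "a = y \<otimes> (\<one> \<oplus> x)" "b = z \<otimes> (\<one> \<oplus> x)" "y \<in> carrier R" "z \<in> carrier R" by blast
      then have "a \<oplus> b = (y \<oplus> z) \<otimes> (\<one> \<oplus> x)" using ox by (simp add: l_distr)
      moreover have "y \<oplus> z \<in> carrier R" using yz by simp
      ultimately show "a \<oplus> b \<in> ?L" by blast
    next
      fix a assume "a \<in> ?L"
      then obtain y where y: "a = y \<otimes> (\<one> \<oplus> x)" "y \<in> carrier R" by blast
      then have "\<ominus> a = (\<ominus> y) \<otimes> (\<one> \<oplus> x)" using ox by (simp add: l_minus)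
      moreover have "\<ominus> y \<in> carrier R" using y by simp
      ultimately show "\<ominus> a \<in> ?L" by blast
    qed
    show "\<forall>a\<in>carrier R. \<forall>b\<in>?L. a \<otimes> b \<in> ?L"
    proof (intro ballI)
      fix a b assume a: "a \<in> carrier R" "b \<in> ?L"
      then obtain y where "b = y \<otimes> (\<one> \<oplus> x)" "y \<in> carrier R" by blast
      then have "a \<otimes> b = (a \<otimes> y) \<otimes> (\<one> \<oplus> x)" "a \<otimes> y \<in> carrier R" using a ox by (simp_all add: m_assoc)
      then show "a \<otimes> b \<in> ?L" by blast
    qed
  qed
  moreover have "\<one> \<notin> ?L"
  proof
    assume "\<one> \<in> ?L"
    then obtain y where "\<one> = y \<otimes> (\<one> \<oplus> x)" "y \<in> carrier R" by blast
    then show False using nv by (metis)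
  qed
  ultimately obtain M where M: "maximal_left_ideal R M" "?L \<subseteq> M" using exists_max by blast
  have Mli: "left_ideal R M" and Mne: "M \<noteq> carrier R" using M(1) unfolding maximal_left_ideal_def by blast+
  have Ms: "additive_subgroup M R" using Mli unfolding left_ideal_def by blast
  have xM: "x \<in> M" using x M(1) unfolding jacobson_def by blast
  have "\<one> \<oplus> x = \<one> \<otimes> (\<one> \<oplus> x)" using ox by simp
  then have "\<one> \<oplus> x \<in> ?L" using one_closed by blast
  then have oxM: "\<one> \<oplus> x \<in> M" using M(2) by blast
  have "(\<one> \<oplus> x) \<oplus> \<ominus> x \<in> M"
    using additive_subgroup.a_closed[OF Ms oxM additive_subgroup.a_inv_closed[OF Ms xM]] .
  moreover have "(\<one> \<oplus> x) \<oplus> \<ominus> x = \<one>" using xc by (simp add: a_assoc r_neg)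
  ultimately have "\<one> \<in> M" by simp
  then have "M = carrier R" using left_ideal_one[OF Mli] by simp
  then show False using Mne by simp
qed

lemma jac_one_plus_unit:
  assumes x: "x \<in> jacobson R"
  shows "\<one> \<oplus> x \<in> Units R"
proof -
  have xc: "x \<in> carrier R" using x jac_sub by blast
  obtain v where v: "v \<in> carrier R" "v \<otimes> (\<one> \<oplus> x) = \<one>" using jac_one_plus_left[OF x] by blast
  have vx: "v \<otimes> x \<in> carrier R" using v xc by simp
  have e1: "v \<oplus> v \<otimes> x = \<one>" using v xc by (simp add: r_distr)
  have veq: "v = \<one> \<oplus> \<ominus> (v \<otimes> x)"
  proof -
    have "v = (v \<oplus> v \<otimes> x) \<oplus> \<ominus> (v \<otimes> x)" using v vx by (simp add: a_assoc r_neg)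
    also have "\<dots> = \<one> \<oplus> \<ominus> (v \<otimes> x)" by (simp only: e1)
    finally show ?thesis .
  qed
  have "\<ominus> (v \<otimes> x) \<in> jacobson R"
    using additive_subgroup.a_inv_closed[OF jac_props(1) jac_props(2)[OF v(1) x]] .
  then have "\<exists>w\<in>carrier R. w \<otimes> (\<one> \<oplus> \<ominus> (v \<otimes> x)) = \<one>" by (rule jac_one_plus_left)
  then obtain w where w0: "w \<in> carrier R" "w \<otimes> (\<one> \<oplus> \<ominus> (v \<otimes> x)) = \<one>" by blast
  have w2: "w \<otimes> v = \<one>" by (subst veq) (rule w0(2))
  have w: "w \<in> carrier R" "w \<otimes> v = \<one>" using w0(1) w2 by auto
  have "w = \<one> \<oplus> x"
  proof -
    have "w = w \<otimes> (v \<otimes> (\<one> \<oplus> x))" using v w by simp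
    also have "\<dots> = (w \<otimes> v) \<otimes> (\<one> \<oplus> x)" using v w xc by (intro m_assoc[symmetric]) auto
    also have "\<dots> = \<one> \<oplus> x" using w xc by simp
    finally show ?thesis .
  qed
  then show ?thesis using v w xc unfolding Units_def by auto
qed

lemma jac_crit:
  assumes xc: "x \<in> carrier R"
    and h: "\<And>y. y \<in> carrier R \<Longrightarrow> \<exists>w\<in>carrier R. w \<otimes> (\<one> \<ominus> y \<otimes> x) = \<one>"
  shows "x \<in> jacobson R"
  unfolding jacobson_def
proof (safe)
  show "x \<in> carrier R" by fact
  fix M assume M: "maximal_left_ideal R M"
  show "x \<in> M"
  proof (rule ccontr)
    assume xM: "x \<notin> M"
    have li: "left_ideal R M" and MS: "additive_subgroup M R" using M
      by (auto simp: maximal_left_ideal_def left_ideal_def)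
    have Mc: "M \<subseteq> carrier R" using li left_ideal_carr by blast
    let ?K = "{m \<oplus> y \<otimes> x | m y. m \<in> M \<and> y \<in> carrier R}"
    have Kli: "left_ideal R ?K"
      unfolding left_ideal_def
    proof
      show "additive_subgroup ?K R"
      proof (rule addsubI)
        show "?K \<subseteq> carrier R"
        proof
          fix a assume "a \<in> ?K"
          then obtain m y where "a = m \<oplus> y \<otimes> x" "m \<in> M" "y \<in> carrier R" by blast
          then show "a \<in> carrier R" using Mc xc by auto
        qed
        have "\<zero> = \<zero> \<oplus> \<zero> \<otimes> x" using xc by simp
        then show "\<zero> \<in> ?K" using MS additive_subgroup.zero_closed by blast
        fix a b assume "a \<in> ?K" "b \<in> ?K"
        then obtain m y m' y' where ab: "a = m \<oplus> y \<otimes> x" "b = m' \<oplus> y' \<otimes> x" "m \<in> M" "y \<in> carrier R" "m' \<in> M" "y' \<in> carrier R" by blast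
        have "a \<oplus> b = (m \<oplus> m') \<oplus> (y \<oplus> y') \<otimes> x"
        proof -
          have c: "m \<in> carrier R" "m' \<in> carrier R" using ab Mc by auto
          show ?thesis using ab(1,2,4,6) c xc by (simp add: l_distr a_ac)
        qed
        moreover have "m \<oplus> m' \<in> M" "y \<oplus> y' \<in> carrier R" using ab MS additive_subgroup.a_closed by auto
        ultimately show "a \<oplus> b \<in> ?K" by blast
      next
        fix a assume "a \<in> ?K"
        then obtain m y where ab: "a = m \<oplus> y \<otimes> x" "m \<in> M" "y \<in> carrier R" by blast
        have "\<ominus> a = \<ominus> m \<oplus> (\<ominus> y) \<otimes> x" using ab Mc xc by (simp add: minus_add l_minus subsetD)
        moreover have "\<ominus> m \<in> M" "\<ominus> y \<in> carrier R" using ab MS additive_subgroup.a_inv_closed by auto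
        ultimately show "\<ominus> a \<in> ?K" by blast
      qed
      show "\<forall>a\<in>carrier R. \<forall>b\<in>?K. a \<otimes> b \<in> ?K"
      proof (intro ballI)
        fix a b assume a: "a \<in> carrier R" and "b \<in> ?K"
        then obtain m y where ab: "b = m \<oplus> y \<otimes> x" "m \<in> M" "y \<in> carrier R" by blast
        have "a \<otimes> b = a \<otimes> m \<oplus> (a \<otimes> y) \<otimes> x" using ab a Mc xc by (simp add: r_distr m_assoc subsetD)
        moreover have "a \<otimes> m \<in> M" "a \<otimes> y \<in> carrier R" using ab a li by (auto simp: left_ideal_def)
        ultimately show "a \<otimes> b \<in> ?K" by blast
      qed
    qed
    have "M \<subseteq> ?K"
    proof
      fix m assume m: "m \<in> M"
      then have "m = m \<oplus> \<zero> \<otimes> x" using xc Mc by auto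
      then show "m \<in> ?K" using m by blast
    qed
    moreover have "x \<in> ?K"
    proof -
      have "x = \<zero> \<oplus> \<one> \<otimes> x" using xc by simp
      then show ?thesis using MS additive_subgroup.zero_closed by blast
    qed
    ultimately have KM: "?K \<noteq> M" "M \<subseteq> ?K" using xM by blast+
    have "?K = carrier R"
    proof (rule ccontr)
      assume "?K \<noteq> carrier R"
      then have "?K = M" using M Kli KM(2) unfolding maximal_left_ideal_def by blast
      then show False using KM(1) by blast
    qed
    then have "\<one> \<in> ?K" using one_closed by simp
    then obtain m y where my: "\<one> = m \<oplus> y \<otimes> x" "m \<in> M" "y \<in> carrier R" by blast
    have mc: "m \<in> carrier R" "y \<otimes> x \<in> carrier R" using my Mc xc by auto
    have "m = (m \<oplus> y \<otimes> x) \<oplus> \<ominus> (y \<otimes> x)" using mc by (simp add: a_assoc r_neg)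
    also have "\<dots> = \<one> \<ominus> y \<otimes> x" by (simp only: my(1)[symmetric] a_minus_def)
    finally have "m = \<one> \<ominus> y \<otimes> x" .
    then obtain w where w: "w \<in> carrier R" "w \<otimes> m = \<one>" using h my by blast
    have "w \<otimes> m \<in> M" using li w(1) my(2) unfolding left_ideal_def by blast
    then have "\<one> \<in> M" using w(2) by simp
    then have "M = carrier R" using left_ideal_one[OF li] by simp
    then show False using M unfolding maximal_left_ideal_def by blast
  qed
qed

end


context ring begin

lemma tcomm:
  assumes "central R s"
  shows "s [^] (2::nat) \<in> carrier R"
    and "\<And>x. x \<in> carrier R \<Longrightarrow> x \<otimes> s [^] (2::nat) = s [^] (2::nat) \<otimes> x"
    and "\<And>x y. x \<in> carrier R \<Longrightarrow> y \<in> carrier R \<Longrightarrow> x \<otimes> (s [^] (2::nat) \<otimes> y) = s [^] (2::nat) \<otimes> (x \<otimes> y)"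
proof -
  have sc: "s \<in> carrier R" and c: "\<And>x. x \<in> carrier R \<Longrightarrow> s \<otimes> x = x \<otimes> s"
    using assms by (auto simp: central_def)
  show "s [^] (2::nat) \<in> carrier R" using sc by simp
  have *: "x \<otimes> s [^] (2::nat) = s [^] (2::nat) \<otimes> x" if "x \<in> carrier R" for x
  proof -
    have s2: "s [^] (2::nat) = s \<otimes> s" using sc by (simp add: numeral_2_eq_2)
    have "x \<otimes> (s \<otimes> s) = (x \<otimes> s) \<otimes> s" using that sc by (simp add: m_assoc)
    also have "\<dots> = (s \<otimes> x) \<otimes> s" using c[OF that] by simp
    also have "\<dots> = s \<otimes> (x \<otimes> s)" using that sc by (simp add: m_assoc)
    also have "\<dots> = s \<otimes> (s \<otimes> x)" using c[OF that] by simp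
    also have "\<dots> = (s \<otimes> s) \<otimes> x" using that sc by (simp add: m_assoc)
    finally show ?thesis using s2 by simp
  qed
  show "\<And>x. x \<in> carrier R \<Longrightarrow> x \<otimes> s [^] (2::nat) = s [^] (2::nat) \<otimes> x" by (rule *)
  show "\<And>x y. x \<in> carrier R \<Longrightarrow> y \<in> carrier R \<Longrightarrow> x \<otimes> (s [^] (2::nat) \<otimes> y) = s [^] (2::nat) \<otimes> (x \<otimes> y)"
    using * sc by (simp add: m_assoc[symmetric])
qed

lemma M2s_simps:
  "carrier (M2s R s) = carrier R \<times> carrier R \<times> carrier R \<times> carrier R"
  "\<one>\<^bsub>M2s R s\<^esub> = (\<one>, \<zero>, \<zero>, \<one>)"
  "\<zero>\<^bsub>M2s R s\<^esub> = (\<zero>, \<zero>, \<zero>, \<zero>)"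
  "(a,b,c,d) \<otimes>\<^bsub>M2s R s\<^esub> (a',b',c',d') = (a \<otimes> a' \<oplus> (s [^] (2::nat)) \<otimes> b \<otimes> c', a \<otimes> b' \<oplus> b \<otimes> d',
         c \<otimes> a' \<oplus> d \<otimes> c', (s [^] (2::nat)) \<otimes> c \<otimes> b' \<oplus> d \<otimes> d')"
  "(a,b,c,d) \<oplus>\<^bsub>M2s R s\<^esub> (a',b',c',d') = (a \<oplus> a', b \<oplus> b', c \<oplus> c', d \<oplus> d')"
  by (simp_all add: M2s_def)

lemma test1:
  assumes cs: "central R s" and c: "a \<in> carrier R" "b \<in> carrier R" "c \<in> carrier R" "d \<in> carrier R"
   "a' \<in> carrier R" "b' \<in> carrier R" "c' \<in> carrier R" "d' \<in> carrier R"
   "a'' \<in> carrier R" "b'' \<in> carrier R" "c'' \<in> carrier R" "d'' \<in> carrier R"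
  shows "((a,b,c,d) \<otimes>\<^bsub>M2s R s\<^esub> (a',b',c',d')) \<otimes>\<^bsub>M2s R s\<^esub> (a'',b'',c'',d'')
     = (a,b,c,d) \<otimes>\<^bsub>M2s R s\<^esub> ((a',b',c',d') \<otimes>\<^bsub>M2s R s\<^esub> (a'',b'',c'',d''))"
    and "((a,b,c,d) \<oplus>\<^bsub>M2s R s\<^esub> (a',b',c',d')) \<otimes>\<^bsub>M2s R s\<^esub> (a'',b'',c'',d'')
     = ((a,b,c,d) \<otimes>\<^bsub>M2s R s\<^esub> (a'',b'',c'',d'')) \<oplus>\<^bsub>M2s R s\<^esub> ((a',b',c',d') \<otimes>\<^bsub>M2s R s\<^esub> (a'',b'',c'',d''))"
    and "(a'',b'',c'',d'') \<otimes>\<^bsub>M2s R s\<^esub> ((a,b,c,d) \<oplus>\<^bsub>M2s R s\<^esub> (a',b',c',d'))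
     = ((a'',b'',c'',d'') \<otimes>\<^bsub>M2s R s\<^esub> (a,b,c,d)) \<oplus>\<^bsub>M2s R s\<^esub> ((a'',b'',c'',d'') \<otimes>\<^bsub>M2s R s\<^esub> (a',b',c',d'))"
  using c tcomm[OF cs] by (simp_all add: M2s_simps l_distr r_distr m_assoc a_ac)

lemma M2s_ring:
  assumes cs: "central R s"
  shows "ring (M2s R s)"
proof -
  note tc = tcomm[OF cs]
  let ?t = "s [^]\<^bsub>R\<^esub> (2::nat)"
  have dec: "\<exists>a b c d. x = (a,b,c,d) \<and> a \<in> carrier R \<and> b \<in> carrier R \<and> c \<in> carrier R \<and> d \<in> carrier R"
    if "x \<in> carrier (M2s R s)" for x using that by (cases x) (auto simp: M2s_simps)
  have ag: "abelian_group (M2s R s)"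
  proof (rule abelian_groupI)
    fix x y z assume h: "x \<in> carrier (M2s R s)" "y \<in> carrier (M2s R s)" "z \<in> carrier (M2s R s)"
    obtain a b c d where x: "x = (a,b,c,d)" "a \<in> carrier R" "b \<in> carrier R" "c \<in> carrier R" "d \<in> carrier R" using dec[OF h(1)] by blast
    obtain a' b' c' d' where y: "y = (a',b',c',d')" "a' \<in> carrier R" "b' \<in> carrier R" "c' \<in> carrier R" "d' \<in> carrier R" using dec[OF h(2)] by blast
    obtain a'' b'' c'' d'' where z: "z = (a'',b'',c'',d'')" "a'' \<in> carrier R" "b'' \<in> carrier R" "c'' \<in> carrier R" "d'' \<in> carrier R" using dec[OF h(3)] by blast
    show "x \<oplus>\<^bsub>M2s R s\<^esub> y \<oplus>\<^bsub>M2s R s\<^esub> z = x \<oplus>\<^bsub>M2s R s\<^esub> (y \<oplus>\<^bsub>M2s R s\<^esub> z)"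
      unfolding x(1) y(1) z(1) using x y z by (simp add: M2s_simps a_assoc)
  next
    fix x y assume h: "x \<in> carrier (M2s R s)" "y \<in> carrier (M2s R s)"
    obtain a b c d where x: "x = (a,b,c,d)" "a \<in> carrier R" "b \<in> carrier R" "c \<in> carrier R" "d \<in> carrier R" using dec[OF h(1)] by blast
    obtain a' b' c' d' where y: "y = (a',b',c',d')" "a' \<in> carrier R" "b' \<in> carrier R" "c' \<in> carrier R" "d' \<in> carrier R" using dec[OF h(2)] by blast
    show "x \<oplus>\<^bsub>M2s R s\<^esub> y \<in> carrier (M2s R s)"
      unfolding x(1) y(1) using x y by (simp add: M2s_simps)
    show "x \<oplus>\<^bsub>M2s R s\<^esub> y = y \<oplus>\<^bsub>M2s R s\<^esub> x"
      unfolding x(1) y(1) using x y by (simp add: M2s_simps a_comm)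
  next
    fix x assume h: "x \<in> carrier (M2s R s)"
    obtain a b c d where x: "x = (a,b,c,d)" "a \<in> carrier R" "b \<in> carrier R" "c \<in> carrier R" "d \<in> carrier R" using dec[OF h(1)] by blast
    show "\<zero>\<^bsub>M2s R s\<^esub> \<oplus>\<^bsub>M2s R s\<^esub> x = x"
      unfolding x(1) using x by (simp add: M2s_simps)
    have "(\<ominus>a, \<ominus>b, \<ominus>c, \<ominus>d) \<oplus>\<^bsub>M2s R s\<^esub> x = \<zero>\<^bsub>M2s R s\<^esub>" "(\<ominus>a, \<ominus>b, \<ominus>c, \<ominus>d) \<in> carrier (M2s R s)"
      unfolding x(1) using x by (simp_all add: M2s_simps l_neg)
    then show "\<exists>y\<in>carrier (M2s R s). y \<oplus>\<^bsub>M2s R s\<^esub> x = \<zero>\<^bsub>M2s R s\<^esub>" by blast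
  qed (simp add: M2s_simps)
  have mo: "monoid (M2s R s)"
  proof (rule monoidI)
    fix x y z assume h: "x \<in> carrier (M2s R s)" "y \<in> carrier (M2s R s)" "z \<in> carrier (M2s R s)"
    obtain a b c d where x: "x = (a,b,c,d)" "a \<in> carrier R" "b \<in> carrier R" "c \<in> carrier R" "d \<in> carrier R" using dec[OF h(1)] by blast
    obtain a' b' c' d' where y: "y = (a',b',c',d')" "a' \<in> carrier R" "b' \<in> carrier R" "c' \<in> carrier R" "d' \<in> carrier R" using dec[OF h(2)] by blast
    obtain a'' b'' c'' d'' where z: "z = (a'',b'',c'',d'')" "a'' \<in> carrier R" "b'' \<in> carrier R" "c'' \<in> carrier R" "d'' \<in> carrier R" using dec[OF h(3)] by blast
    show "x \<otimes>\<^bsub>M2s R s\<^esub> y \<otimes>\<^bsub>M2s R s\<^esub> z = x \<otimes>\<^bsub>M2s R s\<^esub> (y \<otimes>\<^bsub>M2s R s\<^esub> z)"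
      unfolding x(1) y(1) z(1) by (rule test1(1)[OF cs x(2-5) y(2-5) z(2-5)])
  qed (auto simp: M2s_simps tc(1))
  show ?thesis
  proof (rule ringI[OF ag mo])
    fix x y z assume h: "x \<in> carrier (M2s R s)" "y \<in> carrier (M2s R s)" "z \<in> carrier (M2s R s)"
    obtain a b c d where x: "x = (a,b,c,d)" "a \<in> carrier R" "b \<in> carrier R" "c \<in> carrier R" "d \<in> carrier R" using dec[OF h(1)] by blast
    obtain a' b' c' d' where y: "y = (a',b',c',d')" "a' \<in> carrier R" "b' \<in> carrier R" "c' \<in> carrier R" "d' \<in> carrier R" using dec[OF h(2)] by blast
    obtain a'' b'' c'' d'' where z: "z = (a'',b'',c'',d'')" "a'' \<in> carrier R" "b'' \<in> carrier R" "c'' \<in> carrier R" "d'' \<in> carrier R" using dec[OF h(3)] by blast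
    show "(x \<oplus>\<^bsub>M2s R s\<^esub> y) \<otimes>\<^bsub>M2s R s\<^esub> z = x \<otimes>\<^bsub>M2s R s\<^esub> z \<oplus>\<^bsub>M2s R s\<^esub> y \<otimes>\<^bsub>M2s R s\<^esub> z"
      unfolding x(1) y(1) z(1) by (rule test1(2)[OF cs x(2-5) y(2-5) z(2-5)])
    show "z \<otimes>\<^bsub>M2s R s\<^esub> (x \<oplus>\<^bsub>M2s R s\<^esub> y) = z \<otimes>\<^bsub>M2s R s\<^esub> x \<oplus>\<^bsub>M2s R s\<^esub> z \<otimes>\<^bsub>M2s R s\<^esub> y"
      unfolding x(1) y(1) z(1) by (rule test1(3)[OF cs x(2-5) y(2-5) z(2-5)])
  qed
qed

end


context ring begin

lemma unit_neg: "u \<in> Units R \<Longrightarrow> \<ominus> u \<in> Units R"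
proof -
  assume u: "u \<in> Units R"
  then have "\<ominus> u = \<ominus> \<one> \<otimes> u" using Units_closed[OF u] by (simp add: l_minus)
  then show ?thesis using u Units_minus_one_closed Units_m_closed by metis
qed

lemma neg_minus: "x \<in> carrier R \<Longrightarrow> y \<in> carrier R \<Longrightarrow> \<ominus> (x \<ominus> y) = y \<ominus> x"
  by (simp add: a_minus_def minus_add a_comm)

lemma sc_unit: "A \<in> Units R \<Longrightarrow> strongly_clean R A"
proof -
  assume u: "A \<in> Units R"
  then have "A \<in> carrier R" by auto
  then have "A \<ominus> \<zero> = A" by (simp add: a_minus_def)
  then show ?thesis using u unfolding strongly_clean_def by (intro bexI[of _ \<zero>]) auto
qed

lemma sc_one: "A \<in> carrier R \<Longrightarrow> \<one> \<ominus> A \<in> Units R \<Longrightarrow> strongly_clean R A"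
  unfolding strongly_clean_def
  apply (rule bexI[of _ \<one>])
  apply (auto)
  apply (metis neg_minus one_closed unit_neg)
  done

lemma idem_compl:
  assumes e: "e \<in> carrier R" "e \<otimes> e = e"
  shows "(\<one> \<ominus> e) \<otimes> (\<one> \<ominus> e) = \<one> \<ominus> e" "e \<otimes> (\<one> \<ominus> e) = \<zero>" "(\<one> \<ominus> e) \<otimes> e = \<zero>"
proof -
  show 1: "e \<otimes> (\<one> \<ominus> e) = \<zero>" using e by (simp add: a_minus_def r_distr r_minus r_neg)
  show 2: "(\<one> \<ominus> e) \<otimes> e = \<zero>" using e by (simp add: a_minus_def l_distr l_minus r_neg)
  have "(\<one> \<ominus> e) \<otimes> (\<one> \<ominus> e) = \<one> \<otimes> (\<one> \<ominus> e) \<ominus> e \<otimes> (\<one> \<ominus> e)"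
    using e by (simp add: a_minus_def l_distr l_minus)
  then show "(\<one> \<ominus> e) \<otimes> (\<one> \<ominus> e) = \<one> \<ominus> e" using 1 e by (simp add: a_minus_def)
qed

lemma sc_J:
  assumes A: "A \<in> carrier R" and J: "strongly_J_clean R A"
  shows "strongly_clean R A"
proof -
  obtain e where e: "e \<in> carrier R" "e \<otimes> e = e" "A \<otimes> e = e \<otimes> A" "A \<ominus> e \<in> jacobson R"
    using J by (auto simp: strongly_J_clean_def)
  define f where "f = \<one> \<ominus> e"
  define x where "x = A \<ominus> e"
  define v where "v = e \<ominus> f"
  have fc: "f \<in> carrier R" and xc: "x \<in> carrier R" and vc: "v \<in> carrier R"
    using e A by (auto simp: f_def x_def v_def)
  have ff: "f \<otimes> f = f" "e \<otimes> f = \<zero>" "f \<otimes> e = \<zero>" using idem_compl[OF e(1,2)] by (auto simp: f_def)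
  have ef: "e \<oplus> f = \<one>" using e by (simp add: f_def a_minus_def) (metis a_lcomm add.inv_closed one_closed r_neg r_zero)
  have vv: "v \<otimes> v = \<one>"
  proof -
    have "v \<otimes> v = e \<otimes> e \<ominus> e \<otimes> f \<ominus> (f \<otimes> e \<ominus> f \<otimes> f)"
      using e fc by (simp add: v_def a_minus_def l_distr r_distr l_minus r_minus minus_add a_ac)
    also have "\<dots> = e \<oplus> f" using ff e fc by (simp add: a_minus_def)
    finally show ?thesis using ef by simp
  qed
  have vU: "v \<in> Units R" using vv vc by (auto simp: Units_def)
  have "A \<ominus> f = v \<otimes> (\<one> \<oplus> v \<otimes> x)"
  proof -
    have "v \<otimes> (\<one> \<oplus> v \<otimes> x) = v \<oplus> x" using vv vc xc by (simp add: r_distr m_assoc[symmetric])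
    also have "\<dots> = A \<ominus> f"
      using e A fc by (simp add: v_def x_def a_minus_def) (metis a_assoc a_comm add.inv_closed add.m_closed r_neg1)
    finally show ?thesis by simp
  qed
  moreover have "\<one> \<oplus> v \<otimes> x \<in> Units R"
    using jac_one_plus_unit jac_props(2)[OF vc] e(4) by (simp add: x_def)
  ultimately have "A \<ominus> f \<in> Units R" using vU by simp
  moreover have "A \<otimes> f = f \<otimes> A"
    using e A by (simp add: f_def a_minus_def r_distr l_distr r_minus l_minus)
  ultimately show ?thesis using fc ff unfolding strongly_clean_def by blast
qed

lemma transport:
  assumes P: "P \<in> Units R" and A: "A \<in> carrier R"
  defines "A' \<equiv> P \<otimes> A \<otimes> inv P"
  shows "A' \<in> Units R \<Longrightarrow> A \<in> Units R"
    and "\<one> \<ominus> A' \<in> Units R \<Longrightarrow> \<one> \<ominus> A \<in> Units R"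
    and "G \<in> carrier R \<Longrightarrow> G \<otimes> G = G \<Longrightarrow> A' \<otimes> G = G \<otimes> A' \<Longrightarrow>
          (\<And>Y. Y \<in> carrier R \<Longrightarrow> \<one> \<ominus> Y \<otimes> (A' \<ominus> G) \<in> Units R) \<Longrightarrow> strongly_J_clean R A"
proof -
  have Pc: "P \<in> carrier R" "inv P \<in> carrier R" "inv P \<in> Units R" using P by auto
  have bk: "A = inv P \<otimes> A' \<otimes> P"
    using P A Pc by (simp add: A'_def m_assoc[symmetric] Units_l_inv) (simp add: m_assoc Units_l_inv)
  have conj: "inv P \<otimes> (x \<ominus> y) \<otimes> P = inv P \<otimes> x \<otimes> P \<ominus> inv P \<otimes> y \<otimes> P" if "x \<in> carrier R" "y \<in> carrier R" for x y
    using that Pc by (simp add: a_minus_def r_distr l_distr r_minus l_minus)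
  have conj1: "inv P \<otimes> \<one> \<otimes> P = \<one>" using P Pc by simp
  have A'c: "A' \<in> carrier R" using A Pc by (simp add: A'_def)
  show "A' \<in> Units R \<Longrightarrow> A \<in> Units R" using bk Pc P by simp
  show "\<one> \<ominus> A' \<in> Units R \<Longrightarrow> \<one> \<ominus> A \<in> Units R"
  proof -
    assume u: "\<one> \<ominus> A' \<in> Units R"
    have "\<one> \<ominus> A = inv P \<otimes> (\<one> \<ominus> A') \<otimes> P" using conj[of \<one> A'] A'c conj1 bk by simp
    then show ?thesis using u Pc P by simp
  qed
  assume G: "G \<in> carrier R" "G \<otimes> G = G" "A' \<otimes> G = G \<otimes> A'"
    and h: "\<And>Y. Y \<in> carrier R \<Longrightarrow> \<one> \<ominus> Y \<otimes> (A' \<ominus> G) \<in> Units R"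
  define H where "H = inv P \<otimes> G \<otimes> P"
  have Hc: "H \<in> carrier R" using G Pc by (simp add: H_def)
  have PiP: "P \<otimes> inv P = \<one>" "inv P \<otimes> P = \<one>" using P by auto
  have cancelL: "inv P \<otimes> (P \<otimes> w) = w" if "w \<in> carrier R" for w
    using that Pc PiP by (simp add: m_assoc[symmetric])
  have HH: "H \<otimes> H = H"
  proof -
    have "H \<otimes> H = inv P \<otimes> G \<otimes> (P \<otimes> inv P) \<otimes> G \<otimes> P"
      using G Pc by (simp add: H_def m_assoc)
    also have "\<dots> = H" using G Pc PiP by (simp add: H_def m_assoc)
    finally show ?thesis .
  qed
  have AH: "A \<otimes> H = H \<otimes> A"
  proof -
    have "A \<otimes> H = inv P \<otimes> A' \<otimes> (P \<otimes> inv P) \<otimes> G \<otimes> P" using bk G Pc A'c by (simp add: H_def m_assoc)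
    also have "\<dots> = inv P \<otimes> (A' \<otimes> G) \<otimes> P" using G Pc PiP A'c by (simp add: m_assoc)
    also have "\<dots> = inv P \<otimes> (G \<otimes> A') \<otimes> P" using G by simp
    also have "\<dots> = inv P \<otimes> G \<otimes> (P \<otimes> inv P) \<otimes> A' \<otimes> P" using G Pc PiP A'c by (simp add: m_assoc)
    also have "\<dots> = H \<otimes> A" using bk G Pc A'c by (simp add: H_def m_assoc)
    finally show ?thesis .
  qed
  define Z where "Z = A' \<ominus> G"
  have Zc: "Z \<in> carrier R" using A'c G by (simp add: Z_def)
  have AHZ: "A \<ominus> H = inv P \<otimes> Z \<otimes> P" using conj[of A' G] A'c G bk by (simp add: Z_def H_def)
  have "A \<ominus> H \<in> jacobson R"
  proof (rule jac_crit)
    show "A \<ominus> H \<in> carrier R" using A Hc by simp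
    fix Y assume Y: "Y \<in> carrier R"
    define Y' where "Y' = P \<otimes> Y \<otimes> inv P"
    have Y'c: "Y' \<in> carrier R" using Y Pc by (simp add: Y'_def)
    have "Y \<otimes> (A \<ominus> H) = inv P \<otimes> (Y' \<otimes> Z) \<otimes> P"
    proof -
      have "Y \<otimes> (A \<ominus> H) = (inv P \<otimes> P) \<otimes> Y \<otimes> (inv P \<otimes> P) \<otimes> (inv P \<otimes> Z \<otimes> P)"
        using AHZ PiP Y by simp
      also have "\<dots> = inv P \<otimes> (Y' \<otimes> Z) \<otimes> P"
        using Pc Y Zc PiP cancelL by (simp add: Y'_def m_assoc)
      finally show ?thesis .
    qed
    then have "\<one> \<ominus> Y \<otimes> (A \<ominus> H) = inv P \<otimes> (\<one> \<ominus> Y' \<otimes> Z) \<otimes> P"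
      using conj[of \<one> "Y' \<otimes> Z"] conj1 Y'c Zc by simp
    moreover have "\<one> \<ominus> Y' \<otimes> Z \<in> Units R" using h[OF Y'c] by (simp add: Z_def)
    ultimately have u: "\<one> \<ominus> Y \<otimes> (A \<ominus> H) \<in> Units R" using Pc P by simp
    show "\<exists>w\<in>carrier R. w \<otimes> (\<one> \<ominus> Y \<otimes> (A \<ominus> H)) = \<one>"
      using u by (intro bexI[of _ "inv (\<one> \<ominus> Y \<otimes> (A \<ominus> H))"]) auto
  qed
  then show "strongly_J_clean R A" using Hc HH AH unfolding strongly_J_clean_def by blast
qed

end


context ring begin

lemma cancel3: "p \<in> carrier R \<Longrightarrow> q \<in> carrier R \<Longrightarrow> p \<oplus> q = r \<Longrightarrow> \<ominus> p \<oplus> (r \<ominus> q) = \<zero>"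
proof -
  assume pq: "p \<in> carrier R" "q \<in> carrier R" and r: "p \<oplus> q = r"
  have "r \<ominus> q = (p \<oplus> q) \<oplus> \<ominus> q" using r by (simp add: a_minus_def)
  also have "\<dots> = p" using pq by (simp add: a_assoc r_neg)
  finally show ?thesis using pq by (simp add: l_neg)
qed

lemma local_unit:
  assumes L: "local_ring R" and x: "x \<in> carrier R" "x \<notin> jacobson R"
  shows "x \<in> Units R"
proof -
  let ?J = "jacobson R"
  let ?Q = "R Quot ?J"
  have D: "ring ?Q" "\<one>\<^bsub>?Q\<^esub> \<noteq> \<zero>\<^bsub>?Q\<^esub>" "\<forall>y \<in> carrier ?Q - {\<zero>\<^bsub>?Q\<^esub>}. y \<in> Units ?Q"
    using L by (auto simp: local_ring_def division_ring_rec_def)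
  have Jsub: "additive_subgroup ?J R" by (rule jac_props(1))
  have J0: "\<zero> \<in> ?J" using additive_subgroup.zero_closed[OF Jsub] .
  have cos: "?J +> y = {h \<oplus> y | h. h \<in> ?J}" for y
    by (auto simp: a_r_coset_def r_coset_def)
  have mem: "y \<in> ?J +> y" if "y \<in> carrier R" for y using that J0 cos[of y] by (auto intro!: exI[of _ \<zero>])
  have carrQ: "carrier ?Q = {?J +> y | y. y \<in> carrier R}"
    by (auto simp: FactRing_def A_RCOSETS_def RCOSETS_def a_r_coset_def)
  have key: "\<exists>h\<in>?J. y \<otimes> z = h \<oplus> \<one>"
    if "y \<in> carrier R" "z \<in> carrier R" "(?J +> y) \<otimes>\<^bsub>?Q\<^esub> (?J +> z) = \<one>\<^bsub>?Q\<^esub>" for y z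
  proof -
    have "?J +> (y \<otimes> z) \<subseteq> (?J +> y) \<otimes>\<^bsub>?Q\<^esub> (?J +> z)"
      using mem that(1,2) by (auto simp: FactRing_def rcoset_mult_def)
    then have "y \<otimes> z \<in> ?J +> \<one>" using that mem[of "y \<otimes> z"] by (auto simp: FactRing_def)
    then show ?thesis using cos[of \<one>] by auto
  qed
  have ne: "?J +> x \<noteq> \<zero>\<^bsub>?Q\<^esub>" using mem[OF x(1)] x(2) by (auto simp: FactRing_def)
  have "?J +> x \<in> carrier ?Q" using carrQ x by blast
  then have "?J +> x \<in> Units ?Q" using D(3) ne by blast
  then obtain C where C: "C \<in> carrier ?Q" "C \<otimes>\<^bsub>?Q\<^esub> (?J +> x) = \<one>\<^bsub>?Q\<^esub>" "(?J +> x) \<otimes>\<^bsub>?Q\<^esub> C = \<one>\<^bsub>?Q\<^esub>"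
    by (auto simp: Units_def)
  then obtain y where y: "y \<in> carrier R" "C = ?J +> y" using carrQ by blast
  obtain h1 where h1: "h1 \<in> ?J" "y \<otimes> x = h1 \<oplus> \<one>" using key[OF y(1) x(1)] C y by auto
  obtain h2 where h2: "h2 \<in> ?J" "x \<otimes> y = h2 \<oplus> \<one>" using key[OF x(1) y(1)] C y by auto
  have u1: "y \<otimes> x \<in> Units R" using h1 jac_one_plus_unit[OF h1(1)] jac_sub
    by (metis a_comm one_closed subsetD)
  have u2: "x \<otimes> y \<in> Units R" using h2 jac_one_plus_unit[OF h2(1)] jac_sub
    by (metis a_comm one_closed subsetD)
  define p where "p = inv (y \<otimes> x) \<otimes> y"
  define q where "q = y \<otimes> inv (x \<otimes> y)"
  have pc: "p \<in> carrier R" "q \<in> carrier R" using u1 u2 y by (auto simp: p_def q_def)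
  have px: "p \<otimes> x = \<one>" using u1 y x by (simp add: p_def m_assoc)
  have xq: "x \<otimes> q = \<one>" using u2 y x by (simp add: q_def m_assoc[symmetric])
  have "p = q"
  proof -
    have "p = p \<otimes> (x \<otimes> q)" using xq pc by simp
    also have "\<dots> = (p \<otimes> x) \<otimes> q" using pc x by (simp add: m_assoc)
    finally show ?thesis using px pc by simp
  qed
  then show ?thesis using px xq pc x by (auto simp: Units_def)
qed

lemma local_nonunit:
  assumes L: "local_ring R" and x: "x \<in> carrier R" "x \<notin> Units R"
  shows "x \<in> jacobson R"
  using local_unit[OF L] x by blast

lemma jac_one_minus: "x \<in> jacobson R \<Longrightarrow> \<one> \<ominus> x \<in> Units R"
  unfolding a_minus_def
  by (rule jac_one_plus_unit) (rule additive_subgroup.a_inv_closed[OF jac_props(1)])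

lemma local_idem:
  assumes L: "local_ring R" and e: "e \<in> carrier R" "e \<otimes> e = e"
  shows "e = \<zero> \<or> e = \<one>"
proof (cases "e \<in> Units R")
  case True
  have "e = (inv e \<otimes> e) \<otimes> e" using True e by simp
  also have "\<dots> = inv e \<otimes> (e \<otimes> e)" using True e by (intro m_assoc) auto
  also have "\<dots> = \<one>" using True e by simp
  finally have "e = \<one>" .
  then show ?thesis by simp
next
  case False
  then have "e \<in> jacobson R" using local_nonunit[OF L] e by blast
  then have u: "\<one> \<ominus> e \<in> Units R" by (rule jac_one_minus)
  have "e \<otimes> (\<one> \<ominus> e) = \<zero>" using idem_compl[OF e] by simp
  then have "e \<otimes> (\<one> \<ominus> e) \<otimes> inv (\<one> \<ominus> e) = \<zero>" using u by simp
  then have "e = \<zero>" using u e by (simp add: m_assoc)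
  then show ?thesis by simp
qed

end


context ring begin

lemma T_neg:
  assumes cs: "central R s" and c: "a \<in> carrier R" "b \<in> carrier R" "c \<in> carrier R" "d \<in> carrier R"
  shows "\<ominus>\<^bsub>M2s R s\<^esub> (a,b,c,d) = (\<ominus> a, \<ominus> b, \<ominus> c, \<ominus> d)"
proof -
  interpret T: ring "M2s R s" by (rule M2s_ring[OF cs])
  show ?thesis
    by (rule T.minus_equality) (use c in \<open>simp_all add: M2s_simps l_neg\<close>)
qed

lemma T_minus:
  assumes cs: "central R s" and c: "a \<in> carrier R" "b \<in> carrier R" "c \<in> carrier R" "d \<in> carrier R"
    "a' \<in> carrier R" "b' \<in> carrier R" "c' \<in> carrier R" "d' \<in> carrier R"
  shows "(a,b,c,d) \<ominus>\<^bsub>M2s R s\<^esub> (a',b',c',d') = (a \<ominus> a', b \<ominus> b', c \<ominus> c', d \<ominus> d')"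
  unfolding a_minus_def T_neg[OF cs c(5-8)] by (simp add: M2s_simps)

lemma diag_unit:
  assumes cs: "central R s" and u: "x \<in> Units R" "y \<in> Units R"
  shows "(x, \<zero>, \<zero>, y) \<in> Units (M2s R s)"
proof -
  have "(inv x, \<zero>, \<zero>, inv y) \<in> carrier (M2s R s)" "(x, \<zero>, \<zero>, y) \<in> carrier (M2s R s)"
    "(inv x, \<zero>, \<zero>, inv y) \<otimes>\<^bsub>M2s R s\<^esub> (x, \<zero>, \<zero>, y) = \<one>\<^bsub>M2s R s\<^esub>"
    "(x, \<zero>, \<zero>, y) \<otimes>\<^bsub>M2s R s\<^esub> (inv x, \<zero>, \<zero>, inv y) = \<one>\<^bsub>M2s R s\<^esub>"
    using u tcomm(1)[OF cs] by (auto simp: M2s_simps)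
  then show ?thesis unfolding Units_def by blast
qed

lemma diag_unit_D:
  assumes cs: "central R s" and c: "x \<in> carrier R" "y \<in> carrier R"
    and u: "(x, \<zero>, \<zero>, y) \<in> Units (M2s R s)"
  shows "x \<in> Units R" "y \<in> Units R"
proof -
  obtain p q r w where pc: "p \<in> carrier R" "q \<in> carrier R" "r \<in> carrier R" "w \<in> carrier R"
    and e1: "(p,q,r,w) \<otimes>\<^bsub>M2s R s\<^esub> (x, \<zero>, \<zero>, y) = \<one>\<^bsub>M2s R s\<^esub>"
    and e2: "(x, \<zero>, \<zero>, y) \<otimes>\<^bsub>M2s R s\<^esub> (p,q,r,w) = \<one>\<^bsub>M2s R s\<^esub>"
    using u by (auto simp: Units_def M2s_simps)
  have "p \<otimes> x = \<one>" "w \<otimes> y = \<one>" using e1 pc c tcomm(1)[OF cs] by (simp_all add: M2s_simps)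
  moreover have "x \<otimes> p = \<one>" "y \<otimes> w = \<one>" using e2 pc c tcomm(1)[OF cs] by (simp_all add: M2s_simps)
  ultimately show "x \<in> Units R" "y \<in> Units R" using pc c unfolding Units_def by blast+
qed

lemma tri_units:
  assumes cs: "central R s" and c: "v \<in> carrier R"
  shows "(\<one>, \<zero>, v, \<one>) \<in> Units (M2s R s)" "(\<one>, v, \<zero>, \<one>) \<in> Units (M2s R s)"
proof -
  have "(\<one>, \<zero>, \<ominus> v, \<one>) \<in> carrier (M2s R s)" "(\<one>, \<zero>, v, \<one>) \<in> carrier (M2s R s)"
    "(\<one>, \<zero>, \<ominus> v, \<one>) \<otimes>\<^bsub>M2s R s\<^esub> (\<one>, \<zero>, v, \<one>) = \<one>\<^bsub>M2s R s\<^esub>"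
    "(\<one>, \<zero>, v, \<one>) \<otimes>\<^bsub>M2s R s\<^esub> (\<one>, \<zero>, \<ominus> v, \<one>) = \<one>\<^bsub>M2s R s\<^esub>"
    using c tcomm(1)[OF cs] by (auto simp: M2s_simps l_neg r_neg)
  then show "(\<one>, \<zero>, v, \<one>) \<in> Units (M2s R s)" unfolding Units_def by blast
  have "(\<one>, \<ominus> v, \<zero>, \<one>) \<in> carrier (M2s R s)" "(\<one>, v, \<zero>, \<one>) \<in> carrier (M2s R s)"
    "(\<one>, \<ominus> v, \<zero>, \<one>) \<otimes>\<^bsub>M2s R s\<^esub> (\<one>, v, \<zero>, \<one>) = \<one>\<^bsub>M2s R s\<^esub>"
    "(\<one>, v, \<zero>, \<one>) \<otimes>\<^bsub>M2s R s\<^esub> (\<one>, \<ominus> v, \<zero>, \<one>) = \<one>\<^bsub>M2s R s\<^esub>"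
    using c tcomm(1)[OF cs] by (auto simp: M2s_simps l_neg r_neg)
  then show "(\<one>, v, \<zero>, \<one>) \<in> Units (M2s R s)" unfolding Units_def by blast
qed

lemma schur_fact:
  assumes cs: "central R s" and a: "a \<in> Units R" and c: "b \<in> carrier R" "c \<in> carrier R" "d \<in> carrier R"
  shows "(a,b,c,d) = (\<one>, \<zero>, c \<otimes> inv a, \<one>) \<otimes>\<^bsub>M2s R s\<^esub> (a, \<zero>, \<zero>, d \<ominus> s [^] (2::nat) \<otimes> c \<otimes> inv a \<otimes> b)
                        \<otimes>\<^bsub>M2s R s\<^esub> (\<one>, inv a \<otimes> b, \<zero>, \<one>)"
proof -
  note t = tcomm(1)[OF cs]
  have ac: "a \<in> carrier R" "inv a \<in> carrier R" using a by auto
  have e1: "a \<otimes> (inv a \<otimes> b) = b" using a ac c by (simp add: m_assoc[symmetric])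
  have e2: "c \<otimes> inv a \<otimes> a = c" using a ac c by (simp add: m_assoc)
  have e3: "s [^] (2::nat) \<otimes> c \<otimes> (inv a \<otimes> b) \<oplus> (d \<ominus> s [^] (2::nat) \<otimes> c \<otimes> inv a \<otimes> b) = d"
  proof -
    have "s [^] (2::nat) \<otimes> c \<otimes> (inv a \<otimes> b) = s [^] (2::nat) \<otimes> c \<otimes> inv a \<otimes> b"
      using t ac c by (simp add: m_assoc)
    then show ?thesis using t ac c
      by (simp add: a_minus_def) (metis a_comm add.inv_closed add.m_lcomm m_closed r_neg r_zero)
  qed
  show ?thesis using t ac c e1 e2 e3 by (simp add: M2s_simps)
qed

lemma schur_unit:
  assumes cs: "central R s" and a: "a \<in> Units R" and c: "b \<in> carrier R" "c \<in> carrier R" "d \<in> carrier R"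
    and u: "d \<ominus> s [^] (2::nat) \<otimes> c \<otimes> inv a \<otimes> b \<in> Units R"
  shows "(a,b,c,d) \<in> Units (M2s R s)"
proof -
  interpret T: ring "M2s R s" by (rule M2s_ring[OF cs])
  have ac: "a \<in> carrier R" "inv a \<in> carrier R" using a by auto
  show ?thesis
    apply (subst schur_fact[OF cs a c])
    apply (intro T.Units_m_closed tri_units[OF cs] diag_unit[OF cs a u])
    using ac c by auto
qed

end


context ring begin

lemma one_minus_one_minus: "x \<in> carrier R \<Longrightarrow> \<one> \<ominus> (\<one> \<ominus> x) = x"
  by (simp add: a_minus_def minus_add a_assoc[symmetric] r_neg)

lemma mult_one_minus:
  "p \<in> carrier R \<Longrightarrow> x \<in> carrier R \<Longrightarrow> p \<otimes> (\<one> \<ominus> x) = p \<ominus> p \<otimes> x"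
  "p \<in> carrier R \<Longrightarrow> x \<in> carrier R \<Longrightarrow> (\<one> \<ominus> x) \<otimes> p = p \<ominus> x \<otimes> p"
  by (simp_all add: a_minus_def r_distr l_distr r_minus l_minus)

lemma idem_conj:
  assumes cs: "central R s" and L: "local_ring R"
    and E: "(a,b,c,d) \<in> carrier (M2s R s)" "(a,b,c,d) \<otimes>\<^bsub>M2s R s\<^esub> (a,b,c,d) = (a,b,c,d)"
    and a: "a \<in> Units R" and ne: "(a,b,c,d) \<noteq> \<one>\<^bsub>M2s R s\<^esub>"
  shows "\<exists>P\<in>Units (M2s R s). P \<otimes>\<^bsub>M2s R s\<^esub> (a,b,c,d) = (\<one>,\<zero>,\<zero>,\<zero>) \<otimes>\<^bsub>M2s R s\<^esub> P"
proof -
  interpret T: ring "M2s R s" by (rule M2s_ring[OF cs])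
  note t = tcomm(1)[OF cs]
  have c: "b \<in> carrier R" "c \<in> carrier R" "d \<in> carrier R" using E by (auto simp: M2s_simps)
  have ac: "a \<in> carrier R" "inv a \<in> carrier R" using a by auto
  define D where "D = d \<ominus> s [^] (2::nat) \<otimes> c \<otimes> inv a \<otimes> b"
  define Lm where "Lm = (\<one>, \<zero>, c \<otimes> inv a, \<one>)"
  define Um where "Um = (\<one>, inv a \<otimes> b, \<zero>, \<one>)"
  define Dl where "Dl = (a, \<zero>, \<zero>, D)"
  have Dc: "D \<in> carrier R" using t ac c by (simp add: D_def)
  have fact: "(a,b,c,d) = Lm \<otimes>\<^bsub>M2s R s\<^esub> Dl \<otimes>\<^bsub>M2s R s\<^esub> Um"
    unfolding Lm_def Dl_def Um_def D_def by (rule schur_fact[OF cs a c])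
  have LU: "Lm \<in> Units (M2s R s)" "Um \<in> Units (M2s R s)"
    unfolding Lm_def Um_def using tri_units[OF cs] ac c by auto
  have LUc: "Lm \<in> carrier (M2s R s)" "Um \<in> carrier (M2s R s)" "Dl \<in> carrier (M2s R s)"
    using LU Dc ac by (auto simp: Dl_def M2s_simps)
  define W where "W = Um \<otimes>\<^bsub>M2s R s\<^esub> Lm"
  have Wc: "W \<in> carrier (M2s R s)" using LUc by (simp add: W_def)
  have "Lm \<otimes>\<^bsub>M2s R s\<^esub> (Dl \<otimes>\<^bsub>M2s R s\<^esub> W \<otimes>\<^bsub>M2s R s\<^esub> Dl) \<otimes>\<^bsub>M2s R s\<^esub> Um
      = Lm \<otimes>\<^bsub>M2s R s\<^esub> Dl \<otimes>\<^bsub>M2s R s\<^esub> Um"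
  proof -
    have "Lm \<otimes>\<^bsub>M2s R s\<^esub> (Dl \<otimes>\<^bsub>M2s R s\<^esub> W \<otimes>\<^bsub>M2s R s\<^esub> Dl) \<otimes>\<^bsub>M2s R s\<^esub> Um
       = (Lm \<otimes>\<^bsub>M2s R s\<^esub> Dl \<otimes>\<^bsub>M2s R s\<^esub> Um) \<otimes>\<^bsub>M2s R s\<^esub> (Lm \<otimes>\<^bsub>M2s R s\<^esub> Dl \<otimes>\<^bsub>M2s R s\<^esub> Um)"
      using LUc by (simp add: W_def T.m_assoc)
    then show ?thesis using E(2) fact by simp
  qed
  then have X: "Dl \<otimes>\<^bsub>M2s R s\<^esub> W \<otimes>\<^bsub>M2s R s\<^esub> Dl = Dl"
  proof -
    assume h: "Lm \<otimes>\<^bsub>M2s R s\<^esub> (Dl \<otimes>\<^bsub>M2s R s\<^esub> W \<otimes>\<^bsub>M2s R s\<^esub> Dl) \<otimes>\<^bsub>M2s R s\<^esub> Um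
      = Lm \<otimes>\<^bsub>M2s R s\<^esub> Dl \<otimes>\<^bsub>M2s R s\<^esub> Um"
    have canc: "inv\<^bsub>M2s R s\<^esub> Lm \<otimes>\<^bsub>M2s R s\<^esub> (Lm \<otimes>\<^bsub>M2s R s\<^esub> y \<otimes>\<^bsub>M2s R s\<^esub> Um) \<otimes>\<^bsub>M2s R s\<^esub> inv\<^bsub>M2s R s\<^esub> Um = y"
      if "y \<in> carrier (M2s R s)" for y
      using that LU LUc by (simp add: T.m_assoc[symmetric]) (simp add: T.m_assoc)
    have "Dl \<otimes>\<^bsub>M2s R s\<^esub> W \<otimes>\<^bsub>M2s R s\<^esub> Dl \<in> carrier (M2s R s)" using LUc Wc by simp
    then show ?thesis using canc h LUc by metis
  qed
  have "snd (snd (snd (Dl \<otimes>\<^bsub>M2s R s\<^esub> W \<otimes>\<^bsub>M2s R s\<^esub> Dl))) = D \<otimes> D"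
    using t ac c Dc by (simp add: W_def Um_def Lm_def Dl_def M2s_simps)
  then have DD: "D \<otimes> D = D" using X by (simp add: Dl_def)
  have "D \<noteq> \<one>"
  proof
    assume "D = \<one>"
    then have "Dl \<in> Units (M2s R s)" using diag_unit[OF cs a] by (simp add: Dl_def)
    then have Eu: "(a,b,c,d) \<in> Units (M2s R s)" using fact LU by simp
    have "(a,b,c,d) = inv\<^bsub>M2s R s\<^esub> (a,b,c,d) \<otimes>\<^bsub>M2s R s\<^esub> ((a,b,c,d) \<otimes>\<^bsub>M2s R s\<^esub> (a,b,c,d))"
      using Eu E(1) by (simp add: T.m_assoc[symmetric])
    also have "\<dots> = \<one>\<^bsub>M2s R s\<^esub>" using Eu E by simp
    finally show False using ne by simp
  qed
  then have D0: "D = \<zero>" using local_idem[OF L Dc DD] by blast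
  have dk: "d = s [^] (2::nat) \<otimes> c \<otimes> inv a \<otimes> b"
  proof -
    let ?k = "s [^] (2::nat) \<otimes> c \<otimes> inv a \<otimes> b"
    have kc: "?k \<in> carrier R" using t ac c by simp
    have "d \<oplus> \<ominus> ?k = \<zero>" using D0 by (simp add: D_def a_minus_def)
    then have "\<ominus> (\<ominus> ?k) = d" using kc c by (intro minus_equality) auto
    then show ?thesis using kc by simp
  qed
  define P where "P = (a, b, \<ominus> c, \<one> \<ominus> d)"
  have "(\<one> \<ominus> d) \<ominus> s [^] (2::nat) \<otimes> \<ominus> c \<otimes> inv a \<otimes> b = \<one>"
    using t ac c unfolding dk by (simp add: a_minus_def r_minus l_minus a_assoc r_neg l_neg)
  then have PU: "P \<in> Units (M2s R s)" unfolding P_def using schur_unit[OF cs a, of b "\<ominus> c" "\<one> \<ominus> d"] c by simp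
  have q: "a \<otimes> a \<oplus> s [^] (2::nat) \<otimes> b \<otimes> c = a" "a \<otimes> b \<oplus> b \<otimes> d = b"
      "c \<otimes> a \<oplus> d \<otimes> c = c" "s [^] (2::nat) \<otimes> c \<otimes> b \<oplus> d \<otimes> d = d"
    using E(2) by (simp_all add: M2s_simps)
  have r3: "\<ominus> c \<otimes> a \<oplus> (\<one> \<ominus> d) \<otimes> c = \<zero>"
    using cancel3[OF _ _ q(3)] ac c by (simp add: mult_one_minus l_minus)
  have r4: "s [^] (2::nat) \<otimes> \<ominus> c \<otimes> b \<oplus> (\<one> \<ominus> d) \<otimes> d = \<zero>"
    using cancel3[OF _ _ q(4)] t ac c by (simp add: mult_one_minus l_minus r_minus)
  have "P \<otimes>\<^bsub>M2s R s\<^esub> (a,b,c,d) = (\<one>,\<zero>,\<zero>,\<zero>) \<otimes>\<^bsub>M2s R s\<^esub> P"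
    using q r3 r4 t ac c by (simp add: P_def M2s_simps)
  then show ?thesis using PU by blast
qed

end


context ring begin

lemma conj_facts:
  assumes P: "P \<in> Units R" and c: "E \<in> carrier R" "G \<in> carrier R" "A \<in> carrier R"
    and PE: "P \<otimes> E = G \<otimes> P" and AE: "A \<otimes> E = E \<otimes> A"
  shows "(P \<otimes> A \<otimes> inv P) \<otimes> G = G \<otimes> (P \<otimes> A \<otimes> inv P)"
    and "P \<otimes> A \<otimes> inv P \<ominus> G = P \<otimes> (A \<ominus> E) \<otimes> inv P"
proof -
  have Pc: "P \<in> carrier R" "inv P \<in> carrier R" "P \<otimes> inv P = \<one>" "inv P \<otimes> P = \<one>" using P by auto
  have canc: "inv P \<otimes> (P \<otimes> z) = z" if "z \<in> carrier R" for z
    using that Pc by (simp add: m_assoc[symmetric])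
  have G: "G = P \<otimes> E \<otimes> inv P"
  proof -
    have "P \<otimes> E \<otimes> inv P = G \<otimes> (P \<otimes> inv P)" using PE Pc c by (simp add: m_assoc)
    then show ?thesis using Pc c by simp
  qed
  have "(P \<otimes> A \<otimes> inv P) \<otimes> G = P \<otimes> A \<otimes> (inv P \<otimes> P) \<otimes> E \<otimes> inv P"
    unfolding G using Pc c canc by (simp add: m_assoc)
  also have "\<dots> = P \<otimes> (A \<otimes> E) \<otimes> inv P" using Pc c canc by (simp add: m_assoc)
  also have "\<dots> = P \<otimes> (E \<otimes> A) \<otimes> inv P" using AE by simp
  also have "\<dots> = P \<otimes> E \<otimes> (inv P \<otimes> P) \<otimes> A \<otimes> inv P" using Pc c canc by (simp add: m_assoc)
  also have "\<dots> = G \<otimes> (P \<otimes> A \<otimes> inv P)" unfolding G using Pc c canc by (simp add: m_assoc)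
  finally show "(P \<otimes> A \<otimes> inv P) \<otimes> G = G \<otimes> (P \<otimes> A \<otimes> inv P)" .
  show "P \<otimes> A \<otimes> inv P \<ominus> G = P \<otimes> (A \<ominus> E) \<otimes> inv P"
    unfolding G using Pc c by (simp add: a_minus_def r_distr l_distr r_minus l_minus)
qed

lemma idem_conj2:
  assumes cs: "central R s" and L: "local_ring R"
    and E: "E \<in> carrier (M2s R s)" "E \<otimes>\<^bsub>M2s R s\<^esub> E = E"
    and ne: "E \<noteq> \<zero>\<^bsub>M2s R s\<^esub>" "E \<noteq> \<one>\<^bsub>M2s R s\<^esub>"
  shows "\<exists>P\<in>Units (M2s R s). P \<otimes>\<^bsub>M2s R s\<^esub> E = (\<one>,\<zero>,\<zero>,\<zero>) \<otimes>\<^bsub>M2s R s\<^esub> P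
           \<or> P \<otimes>\<^bsub>M2s R s\<^esub> E = (\<zero>,\<zero>,\<zero>,\<one>) \<otimes>\<^bsub>M2s R s\<^esub> P"
proof -
  interpret T: ring "M2s R s" by (rule M2s_ring[OF cs])
  obtain a b c d where Ed: "E = (a,b,c,d)" by (cases E) auto
  have c: "a \<in> carrier R" "b \<in> carrier R" "c \<in> carrier R" "d \<in> carrier R" using E Ed by (auto simp: M2s_simps)
  show ?thesis
  proof (cases "a \<in> Units R")
    case True
    then show ?thesis using idem_conj[OF cs L, of a b c d] E ne unfolding Ed by auto
  next
    case False
    then have aJ: "a \<in> jacobson R" using local_nonunit[OF L] c by blast
    define F where "F = \<one>\<^bsub>M2s R s\<^esub> \<ominus>\<^bsub>M2s R s\<^esub> E"
    have Fd: "F = (\<one> \<ominus> a, \<zero> \<ominus> b, \<zero> \<ominus> c, \<one> \<ominus> d)"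
      unfolding F_def Ed by (simp add: M2s_simps T_minus[OF cs] c)
    have Fc: "F \<in> carrier (M2s R s)" using E by (simp add: F_def)
    have FF: "F \<otimes>\<^bsub>M2s R s\<^esub> F = F" using T.idem_compl(1)[OF E] by (simp add: F_def)
    have EF: "E = \<one>\<^bsub>M2s R s\<^esub> \<ominus>\<^bsub>M2s R s\<^esub> F" using T.one_minus_one_minus[OF E(1)] by (simp add: F_def)
    have "F \<noteq> \<one>\<^bsub>M2s R s\<^esub>"
    proof
      assume "F = \<one>\<^bsub>M2s R s\<^esub>"
      then have "E = \<zero>\<^bsub>M2s R s\<^esub>" using EF by (simp add: a_minus_def T.r_neg)
      then show False using ne by simp
    qed
    moreover have "\<one> \<ominus> a \<in> Units R" using jac_one_minus[OF aJ] .
    ultimately obtain P where P: "P \<in> Units (M2s R s)" "P \<otimes>\<^bsub>M2s R s\<^esub> F = (\<one>,\<zero>,\<zero>,\<zero>) \<otimes>\<^bsub>M2s R s\<^esub> P"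
      using idem_conj[OF cs L, of "\<one> \<ominus> a" "\<zero> \<ominus> b" "\<zero> \<ominus> c" "\<one> \<ominus> d"] Fc FF Fd by auto
    have Pc: "P \<in> carrier (M2s R s)" using P by auto
    have E0c: "(\<one>,\<zero>,\<zero>,\<zero>) \<in> carrier (M2s R s)" by (simp add: M2s_simps)
    have F0: "\<one>\<^bsub>M2s R s\<^esub> \<ominus>\<^bsub>M2s R s\<^esub> (\<one>,\<zero>,\<zero>,\<zero>) = (\<zero>,\<zero>,\<zero>,\<one>)"
      by (simp add: M2s_simps T_minus[OF cs]; simp add: a_minus_def r_neg)
    have "P \<otimes>\<^bsub>M2s R s\<^esub> E = P \<ominus>\<^bsub>M2s R s\<^esub> P \<otimes>\<^bsub>M2s R s\<^esub> F"
      unfolding EF using T.mult_one_minus(1)[OF Pc Fc] .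
    also have "\<dots> = P \<ominus>\<^bsub>M2s R s\<^esub> (\<one>,\<zero>,\<zero>,\<zero>) \<otimes>\<^bsub>M2s R s\<^esub> P" using P by simp
    also have "\<dots> = (\<one>\<^bsub>M2s R s\<^esub> \<ominus>\<^bsub>M2s R s\<^esub> (\<one>,\<zero>,\<zero>,\<zero>)) \<otimes>\<^bsub>M2s R s\<^esub> P"
      using T.mult_one_minus(2)[OF Pc E0c] by simp
    finally show ?thesis using P F0 by auto
  qed
qed

lemma jcrit_diag:
  assumes cs: "central R s" and j: "j1 \<in> jacobson R" "j2 \<in> jacobson R"
    and Y: "Y \<in> carrier (M2s R s)"
  shows "\<one>\<^bsub>M2s R s\<^esub> \<ominus>\<^bsub>M2s R s\<^esub> Y \<otimes>\<^bsub>M2s R s\<^esub> (j1, \<zero>, \<zero>, j2) \<in> Units (M2s R s)"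
proof -
  note t = tcomm(1)[OF cs]
  obtain y1 y2 y3 y4 where Yd: "Y = (y1,y2,y3,y4)" by (cases Y) auto
  have c: "y1 \<in> carrier R" "y2 \<in> carrier R" "y3 \<in> carrier R" "y4 \<in> carrier R" using Y Yd by (auto simp: M2s_simps)
  have jc: "j1 \<in> carrier R" "j2 \<in> carrier R" using j jac_sub by auto
  have prod: "Y \<otimes>\<^bsub>M2s R s\<^esub> (j1, \<zero>, \<zero>, j2) = (y1 \<otimes> j1, y2 \<otimes> j2, y3 \<otimes> j1, y4 \<otimes> j2)"
    using t c jc by (simp add: Yd M2s_simps)
  have eq: "\<one>\<^bsub>M2s R s\<^esub> \<ominus>\<^bsub>M2s R s\<^esub> Y \<otimes>\<^bsub>M2s R s\<^esub> (j1, \<zero>, \<zero>, j2)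
      = (\<one> \<ominus> y1 \<otimes> j1, \<ominus> (y2 \<otimes> j2), \<ominus> (y3 \<otimes> j1), \<one> \<ominus> y4 \<otimes> j2)"
    unfolding prod using c jc by (simp add: M2s_simps T_minus[OF cs]; simp add: a_minus_def)
  define a0 where "a0 = \<one> \<ominus> y1 \<otimes> j1"
  have a0U: "a0 \<in> Units R" unfolding a0_def by (rule jac_one_minus) (rule jac_props(2)[OF c(1) j(1)])
  have a0c: "inv a0 \<in> carrier R" using a0U by auto
  define w where "w = y4 \<oplus> s [^] (2::nat) \<otimes> y3 \<otimes> j1 \<otimes> inv a0 \<otimes> y2"
  have wc: "w \<in> carrier R" using t c jc a0c by (simp add: w_def)
  have "(\<one> \<ominus> y4 \<otimes> j2) \<ominus> s [^] (2::nat) \<otimes> \<ominus> (y3 \<otimes> j1) \<otimes> inv a0 \<otimes> \<ominus> (y2 \<otimes> j2) = \<one> \<ominus> w \<otimes> j2"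
    using t c jc a0c by (simp add: w_def a_minus_def r_minus l_minus l_distr minus_add m_assoc a_assoc)
  moreover have "\<one> \<ominus> w \<otimes> j2 \<in> Units R" by (rule jac_one_minus) (rule jac_props(2)[OF wc j(2)])
  ultimately show ?thesis unfolding eq using schur_unit[OF cs a0U] c jc by (simp add: a0_def)
qed

lemma diag_finish:
  assumes cs: "central R s" and L: "local_ring R" and c: "x \<in> carrier R" "y \<in> carrier R"
    and h: "(x \<ominus> \<one> \<in> Units R \<and> y \<in> Units R) \<or> (x \<in> Units R \<and> y \<ominus> \<one> \<in> Units R)"
  shows "(x,\<zero>,\<zero>,y) \<in> Units (M2s R s) \<or> \<one>\<^bsub>M2s R s\<^esub> \<ominus>\<^bsub>M2s R s\<^esub> (x,\<zero>,\<zero>,y) \<in> Units (M2s R s)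
    \<or> (\<exists>G\<in>{(\<one>,\<zero>,\<zero>,\<zero>), (\<zero>,\<zero>,\<zero>,\<one>)}. \<forall>Y\<in>carrier (M2s R s).
         \<one>\<^bsub>M2s R s\<^esub> \<ominus>\<^bsub>M2s R s\<^esub> Y \<otimes>\<^bsub>M2s R s\<^esub> ((x,\<zero>,\<zero>,y) \<ominus>\<^bsub>M2s R s\<^esub> G) \<in> Units (M2s R s))"
proof -
  have m1: "\<one> \<ominus> x = \<ominus> (x \<ominus> \<one>)" "\<one> \<ominus> y = \<ominus> (y \<ominus> \<one>)" using c by (simp_all add: neg_minus)
  have dm: "\<one>\<^bsub>M2s R s\<^esub> \<ominus>\<^bsub>M2s R s\<^esub> (x,\<zero>,\<zero>,y) = (\<one> \<ominus> x, \<zero>, \<zero>, \<one> \<ominus> y)"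
    using c by (simp add: M2s_simps T_minus[OF cs]; simp add: a_minus_def)
  have dE: "(x,\<zero>,\<zero>,y) \<ominus>\<^bsub>M2s R s\<^esub> (\<one>,\<zero>,\<zero>,\<zero>) = (x \<ominus> \<one>, \<zero>, \<zero>, y)"
    using c by (simp add: T_minus[OF cs]; simp add: a_minus_def)
  have dF: "(x,\<zero>,\<zero>,y) \<ominus>\<^bsub>M2s R s\<^esub> (\<zero>,\<zero>,\<zero>,\<one>) = (x, \<zero>, \<zero>, y \<ominus> \<one>)"
    using c by (simp add: T_minus[OF cs]; simp add: a_minus_def)
  show ?thesis
  proof (cases "x \<in> Units R \<and> y \<in> Units R")
    case True then show ?thesis using diag_unit[OF cs] by blast
  next
    case F1: False
    show ?thesis
    proof (cases "x \<ominus> \<one> \<in> Units R \<and> y \<ominus> \<one> \<in> Units R")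
      case True
      then have "(\<one> \<ominus> x, \<zero>, \<zero>, \<one> \<ominus> y) \<in> Units (M2s R s)"
        using diag_unit[OF cs] m1 unit_neg by simp
      then show ?thesis using dm by simp
    next
      case F2: False
      show ?thesis
      proof (cases "x \<ominus> \<one> \<in> Units R \<and> y \<in> Units R")
        case True
        then have "x \<in> jacobson R" "y \<ominus> \<one> \<in> jacobson R" using F1 F2 local_nonunit[OF L] c by auto
        then have "\<forall>Y\<in>carrier (M2s R s). \<one>\<^bsub>M2s R s\<^esub> \<ominus>\<^bsub>M2s R s\<^esub> Y \<otimes>\<^bsub>M2s R s\<^esub> ((x,\<zero>,\<zero>,y) \<ominus>\<^bsub>M2s R s\<^esub> (\<zero>,\<zero>,\<zero>,\<one>)) \<in> Units (M2s R s)"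
          unfolding dF using jcrit_diag[OF cs] by blast
        then show ?thesis by blast
      next
        case False
        then have xy: "x \<in> Units R" "y \<ominus> \<one> \<in> Units R" using h by auto
        then have "x \<ominus> \<one> \<in> jacobson R" "y \<in> jacobson R" using F1 F2 local_nonunit[OF L] c by auto
        then have "\<forall>Y\<in>carrier (M2s R s). \<one>\<^bsub>M2s R s\<^esub> \<ominus>\<^bsub>M2s R s\<^esub> Y \<otimes>\<^bsub>M2s R s\<^esub> ((x,\<zero>,\<zero>,y) \<ominus>\<^bsub>M2s R s\<^esub> (\<one>,\<zero>,\<zero>,\<zero>)) \<in> Units (M2s R s)"
          unfolding dE using jcrit_diag[OF cs] by blast
        then show ?thesis by blast
      qed
    qed
  qed
qed

end


context ring begin
lemma main_thm:
  assumes "local_ring R" and "central R s"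
    and "A \<in> carrier (M2s R s)"
  shows "strongly_clean (M2s R s) A \<longleftrightarrow>
           A \<in> Units (M2s R s)
         \<or> \<one>\<^bsub>M2s R s\<^esub> \<ominus>\<^bsub>M2s R s\<^esub> A \<in> Units (M2s R s)
         \<or> strongly_J_clean (M2s R s) A"
proof -
  note cs = assms(2) and L = assms(1) and Ac = assms(3)
  interpret T: ring "M2s R s" by (rule M2s_ring[OF cs])
  show ?thesis
  proof
    assume "A \<in> Units (M2s R s) \<or> \<one>\<^bsub>M2s R s\<^esub> \<ominus>\<^bsub>M2s R s\<^esub> A \<in> Units (M2s R s) \<or> strongly_J_clean (M2s R s) A"
    then show "strongly_clean (M2s R s) A"
      using T.sc_unit T.sc_one[OF Ac] T.sc_J[OF Ac] by blast
  next
    assume "strongly_clean (M2s R s) A"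
    then obtain E where E: "E \<in> carrier (M2s R s)" "E \<otimes>\<^bsub>M2s R s\<^esub> E = E"
      "A \<otimes>\<^bsub>M2s R s\<^esub> E = E \<otimes>\<^bsub>M2s R s\<^esub> A" "A \<ominus>\<^bsub>M2s R s\<^esub> E \<in> Units (M2s R s)"
      unfolding strongly_clean_def by blast
    show "A \<in> Units (M2s R s) \<or> \<one>\<^bsub>M2s R s\<^esub> \<ominus>\<^bsub>M2s R s\<^esub> A \<in> Units (M2s R s) \<or> strongly_J_clean (M2s R s) A"
    proof (cases "E = \<zero>\<^bsub>M2s R s\<^esub>")
      case True
      then have "A \<ominus>\<^bsub>M2s R s\<^esub> E = A" using Ac by (simp add: a_minus_def)
      then show ?thesis using E by simp
    next
      case E0: False
      show ?thesis
      proof (cases "E = \<one>\<^bsub>M2s R s\<^esub>")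
        case True
        then have "\<one>\<^bsub>M2s R s\<^esub> \<ominus>\<^bsub>M2s R s\<^esub> A = \<ominus>\<^bsub>M2s R s\<^esub> (A \<ominus>\<^bsub>M2s R s\<^esub> E)"
          using Ac by (simp add: T.neg_minus)
        then show ?thesis using E T.unit_neg by simp
      next
        case E1: False
        obtain P where P: "P \<in> Units (M2s R s)"
          and PE: "P \<otimes>\<^bsub>M2s R s\<^esub> E = (\<one>,\<zero>,\<zero>,\<zero>) \<otimes>\<^bsub>M2s R s\<^esub> P
           \<or> P \<otimes>\<^bsub>M2s R s\<^esub> E = (\<zero>,\<zero>,\<zero>,\<one>) \<otimes>\<^bsub>M2s R s\<^esub> P"
          using idem_conj2[OF cs L E(1,2) E0 E1] by blast
        have Pc: "P \<in> carrier (M2s R s)" "inv\<^bsub>M2s R s\<^esub> P \<in> carrier (M2s R s)"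
          "inv\<^bsub>M2s R s\<^esub> P \<in> Units (M2s R s)" using P by auto
        define A' where "A' = P \<otimes>\<^bsub>M2s R s\<^esub> A \<otimes>\<^bsub>M2s R s\<^esub> inv\<^bsub>M2s R s\<^esub> P"
        have A'c: "A' \<in> carrier (M2s R s)" using Pc Ac by (simp add: A'_def)
        obtain x q r y where A'd: "A' = (x,q,r,y)" by (cases A') auto
        have xc: "x \<in> carrier R" "q \<in> carrier R" "r \<in> carrier R" "y \<in> carrier R"
          using A'c A'd by (auto simp: M2s_simps)
        note t = tcomm(1)[OF cs]
        have E0c: "(\<one>,\<zero>,\<zero>,\<zero>) \<in> carrier (M2s R s)" "(\<zero>,\<zero>,\<zero>,\<one>) \<in> carrier (M2s R s)"
          by (auto simp: M2s_simps)
        have E0i: "(\<one>,\<zero>,\<zero>,\<zero>) \<otimes>\<^bsub>M2s R s\<^esub> (\<one>,\<zero>,\<zero>,\<zero>) = (\<one>,\<zero>,\<zero>,\<zero>)"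
          "(\<zero>,\<zero>,\<zero>,\<one>) \<otimes>\<^bsub>M2s R s\<^esub> (\<zero>,\<zero>,\<zero>,\<one>) = (\<zero>,\<zero>,\<zero>,\<one>)"
          using t by (auto simp: M2s_simps)
        have diagc: "(x,\<zero>,\<zero>,y) \<otimes>\<^bsub>M2s R s\<^esub> G = G \<otimes>\<^bsub>M2s R s\<^esub> (x,\<zero>,\<zero>,y)"
          if "G \<in> {(\<one>,\<zero>,\<zero>,\<zero>), (\<zero>,\<zero>,\<zero>,\<one>)}" for G
          using that t xc by (auto simp: M2s_simps)
        have fin: "A \<in> Units (M2s R s) \<or> \<one>\<^bsub>M2s R s\<^esub> \<ominus>\<^bsub>M2s R s\<^esub> A \<in> Units (M2s R s) \<or> strongly_J_clean (M2s R s) A"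
          if qr: "q = \<zero>" "r = \<zero>"
            and h: "(x \<ominus> \<one> \<in> Units R \<and> y \<in> Units R) \<or> (x \<in> Units R \<and> y \<ominus> \<one> \<in> Units R)"
        proof -
          have A'e: "A' = (x,\<zero>,\<zero>,y)" using A'd qr by simp
          note tr = T.transport[OF P Ac]
          from diag_finish[OF cs L xc(1,4) h] show ?thesis
          proof (elim disjE bexE)
            assume "(x,\<zero>,\<zero>,y) \<in> Units (M2s R s)"
            then show ?thesis using tr(1) A'e A'_def by simp
          next
            assume "\<one>\<^bsub>M2s R s\<^esub> \<ominus>\<^bsub>M2s R s\<^esub> (x,\<zero>,\<zero>,y) \<in> Units (M2s R s)"
            then show ?thesis using tr(2) A'e A'_def by simp
          next
            fix G assume G: "G \<in> {(\<one>,\<zero>,\<zero>,\<zero>), (\<zero>,\<zero>,\<zero>,\<one>)}"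
              and hG: "\<forall>Y\<in>carrier (M2s R s). \<one>\<^bsub>M2s R s\<^esub> \<ominus>\<^bsub>M2s R s\<^esub> Y \<otimes>\<^bsub>M2s R s\<^esub> ((x,\<zero>,\<zero>,y) \<ominus>\<^bsub>M2s R s\<^esub> G) \<in> Units (M2s R s)"
            have "G \<in> carrier (M2s R s)" "G \<otimes>\<^bsub>M2s R s\<^esub> G = G" using G E0c E0i by auto
            moreover have "A' \<otimes>\<^bsub>M2s R s\<^esub> G = G \<otimes>\<^bsub>M2s R s\<^esub> A'" using diagc[OF G] A'e by simp
            ultimately have "strongly_J_clean (M2s R s) A"
              using tr(3)[of G] hG A'e unfolding A'_def by simp
            then show ?thesis by simp
          qed
        qed
        from PE show ?thesis
        proof
          assume PE0: "P \<otimes>\<^bsub>M2s R s\<^esub> E = (\<one>,\<zero>,\<zero>,\<zero>) \<otimes>\<^bsub>M2s R s\<^esub> P"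
          note cf = T.conj_facts[OF P E(1) E0c(1) Ac PE0 E(3)]
          have comm: "A' \<otimes>\<^bsub>M2s R s\<^esub> (\<one>,\<zero>,\<zero>,\<zero>) = (\<one>,\<zero>,\<zero>,\<zero>) \<otimes>\<^bsub>M2s R s\<^esub> A'"
            using cf(1) by (simp add: A'_def)
          then have qr: "q = \<zero>" "r = \<zero>" using t xc by (simp_all add: A'd M2s_simps)
          have "A' \<ominus>\<^bsub>M2s R s\<^esub> (\<one>,\<zero>,\<zero>,\<zero>) \<in> Units (M2s R s)"
            using cf(2) E(4) P Pc by (simp add: A'_def)
          moreover have "A' \<ominus>\<^bsub>M2s R s\<^esub> (\<one>,\<zero>,\<zero>,\<zero>) = (x \<ominus> \<one>, \<zero>, \<zero>, y)"
            using xc qr by (simp add: A'd T_minus[OF cs]; simp add: a_minus_def)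
          ultimately have u: "(x \<ominus> \<one>, \<zero>, \<zero>, y) \<in> Units (M2s R s)" by simp
          have "x \<ominus> \<one> \<in> Units R" "y \<in> Units R" using diag_unit_D[OF cs _ _ u] xc by auto
          then show ?thesis using fin[OF qr] by blast
        next
          assume PE0: "P \<otimes>\<^bsub>M2s R s\<^esub> E = (\<zero>,\<zero>,\<zero>,\<one>) \<otimes>\<^bsub>M2s R s\<^esub> P"
          note cf = T.conj_facts[OF P E(1) E0c(2) Ac PE0 E(3)]
          have comm: "A' \<otimes>\<^bsub>M2s R s\<^esub> (\<zero>,\<zero>,\<zero>,\<one>) = (\<zero>,\<zero>,\<zero>,\<one>) \<otimes>\<^bsub>M2s R s\<^esub> A'"
            using cf(1) by (simp add: A'_def)
          then have qr: "q = \<zero>" "r = \<zero>" using t xc by (simp_all add: A'd M2s_simps)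
          have "A' \<ominus>\<^bsub>M2s R s\<^esub> (\<zero>,\<zero>,\<zero>,\<one>) \<in> Units (M2s R s)"
            using cf(2) E(4) P Pc by (simp add: A'_def)
          moreover have "A' \<ominus>\<^bsub>M2s R s\<^esub> (\<zero>,\<zero>,\<zero>,\<one>) = (x, \<zero>, \<zero>, y \<ominus> \<one>)"
            using xc qr by (simp add: A'd T_minus[OF cs]; simp add: a_minus_def)
          ultimately have u: "(x, \<zero>, \<zero>, y \<ominus> \<one>) \<in> Units (M2s R s)" by simp
          have "x \<in> Units R" "y \<ominus> \<one> \<in> Units R" using diag_unit_D[OF cs _ _ u] xc by auto
          then show ?thesis using fin[OF qr] by blast
        qed
      qed
    qed
  qed
qed
end

theorem theorem2p13:
  fixes R :: "('a, 'b) ring_scheme" and s :: 'a and A :: "'a \<times> 'a \<times> 'a \<times> 'a"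
  assumes "ring R" and "local_ring R" and "central R s"
    and "A \<in> carrier (M2s R s)"
  shows "strongly_clean (M2s R s) A \<longleftrightarrow>
           A \<in> Units (M2s R s)
         \<or> \<one>\<^bsub>M2s R s\<^esub> \<ominus>\<^bsub>M2s R s\<^esub> A \<in> Units (M2s R s)
         \<or> strongly_J_clean (M2s R s) A"
  by (rule ring.main_thm[OF assms])


end
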